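(* Let $\mathbb{K}$ be an algebraically closed field of characteristic zero, $\mathcal{C}\subset\mathbb{K}^2$ an affine irreducible plane curve defined by an irreducible polynomial $f$, $A=(a,b)\in\mathbb{K}^2$, $d\in\mathbb{K}\setminus\{0\}$, and assume $\mathcal{C}_0\neq\emptyset$. Then: (1) if $\Omega$ is a non-empty open subset of $\mathcal{C}$, then $\pi_1(\pi_2^{-1}(\Omega))$ is a non-empty Zariski dense subset of $\mathfrak{C}(\mathcal{C},A,d)$; (2) if $\mathcal{C}$ is not the circle centered at $A$ of radius $d$, and $\Omega$ is a non-empty open subset of an irreducible component of $\mathfrak{C}(\mathcal{C},A,d)$, then $\pi_2(\pi_1^{-1}(\Omega))$ is a non-empty Zariski dense subset of $\mathcal{C}$.
   Context: $\mathfrak{B}(\mathcal{C},A,d)\subset\mathbb{K}^2\times\mathbb{K}^2\times\mathbb{K}$ is the algebraic set of $(\bar x,\bar y,w)$ with $f(y_1,y_2)=0$, $(x_1-y_1)^2+(x_2-y_2)^2=d^2$, $(y_2-b)(x_1-y_1)-(y_1-a)(x_2-y_2)=0$, $w((y_1-a)^2+(y_2-b)^2)=1$; $\pi_1,\pi_2$ are the projections $(\bar x,\bar y,w)\mapsto\bar x$ and $\mapsto\bar y$ restricted to $\mathfrak{B}(\mathcal{C},A,d)$. The conchoid $\mathfrak{C}(\mathcal{C},A,d)$ is the Zariski closure of $\pi_1(\mathfrak{B}(\mathcal{C},A,d))$. $\mathcal{C}_0=\{(p_1,p_2)\in\mathcal{C}:(p_1-a)^2+(p_2-b)^2\neq0\}$.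 The circle centered at $A$ of radius $d$ is $(y_1-a)^2+(y_2-b)^2=d^2$. *)

theory Defs
  imports "HOL-Computational_Algebra.Computational_Algebra"
begin

text \<open>Bivariate polynomials over a field are represented as 'a poly poly:
  g = sum_i c_i(X) Y^i with c_i in 'a poly; eval2 g (x,y) = sum_i c_i(x) y^i.\<close>

definition eval2 :: "'a::comm_ring_1 poly poly \<Rightarrow> 'a \<times> 'a \<Rightarrow> 'a" where
  "eval2 g p = poly (map_poly (\<lambda>c. poly c (fst p)) g) (snd p)"

definition zero_set :: "'a::comm_ring_1 poly poly set \<Rightarrow> ('a \<times> 'a) set" where
  "zero_set P = {p. \<forall>g\<in>P. eval2 g p = 0}"

definition zar_closed :: "('a::comm_ring_1 \<times> 'a) set \<Rightarrow> bool" where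
  "zar_closed S \<longleftrightarrow> (\<exists>P. S = zero_set P)"

definition zar_closure :: "('a::comm_ring_1 \<times> 'a) set \<Rightarrow> ('a \<times> 'a) set" where
  "zar_closure S = \<Inter>{T. zar_closed T \<and> S \<subseteq> T}"

definition zar_open_in :: "('a::comm_ring_1 \<times> 'a) set \<Rightarrow> ('a \<times> 'a) set \<Rightarrow> bool" where
  "zar_open_in X U \<longleftrightarrow> (\<exists>T. zar_closed T \<and> U = X - T)"

definition zar_dense_in :: "('a::comm_ring_1 \<times> 'a) set \<Rightarrow> ('a \<times> 'a) set \<Rightarrow> bool" where
  "zar_dense_in X S \<longleftrightarrow> S \<subseteq> X \<and> X \<subseteq> zar_closure S"

definition zar_irreducible :: "('a::comm_ring_1 \<times> 'a) set \<Rightarrow> bool" where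
  "zar_irreducible Z \<longleftrightarrow> Z \<noteq> {} \<and>
     (\<forall>Z1 Z2. zar_closed Z1 \<and> zar_closed Z2 \<and> Z \<subseteq> Z1 \<union> Z2 \<longrightarrow> Z \<subseteq> Z1 \<or> Z \<subseteq> Z2)"

definition irred_component :: "('a::comm_ring_1 \<times> 'a) set \<Rightarrow> ('a \<times> 'a) set \<Rightarrow> bool" where
  "irred_component X Z \<longleftrightarrow> Z \<subseteq> X \<and> zar_closed Z \<and> zar_irreducible Z \<and>
     (\<forall>Z'. Z \<subseteq> Z' \<and> Z' \<subseteq> X \<and> zar_closed Z' \<and> zar_irreducible Z' \<longrightarrow> Z' = Z)"

definition conchB ::
  "'a::comm_ring_1 poly poly \<Rightarrow> 'a \<Rightarrow> 'a \<Rightarrow> 'a \<Rightarrow> (('a \<times> 'a) \<times> ('a \<times> 'a) \<times> 'a) set" where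
  "conchB f a b d = {((x1, x2), (y1, y2), w).
      eval2 f (y1, y2) = 0 \<and>
      (x1 - y1)^2 + (x2 - y2)^2 = d^2 \<and>
      (y2 - b) * (x1 - y1) - (y1 - a) * (x2 - y2) = 0 \<and>
      w * ((y1 - a)^2 + (y2 - b)^2) = 1}"

definition pi1 :: "('a \<times> 'a) \<times> ('a \<times> 'a) \<times> 'a \<Rightarrow> 'a \<times> 'a" where
  "pi1 t = fst t"

definition pi2 :: "('a \<times> 'a) \<times> ('a \<times> 'a) \<times> 'a \<Rightarrow> 'a \<times> 'a" where
  "pi2 t = fst (snd t)"

definition conchoid :: "'a::comm_ring_1 poly poly \<Rightarrow> 'a \<Rightarrow> 'a \<Rightarrow> 'a \<Rightarrow> ('a \<times> 'a) set" where
  "conchoid f a b d = zar_closure (pi1 ` conchB f a b d)"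

end

theory Submission
  imports Defs
begin

definition ev :: "'a::comm_ring_1 \<Rightarrow> 'a poly poly \<Rightarrow> 'a poly" where
  "ev x p = map_poly (\<lambda>c. poly c x) p"

lemma coeff_ev: "coeff (ev x p) i = poly (coeff p i) x"
  unfolding ev_def by (simp add: coeff_map_poly)

lemma ev_add: "ev x (p + q) = ev x p + ev x q"
  by (rule poly_eqI) (simp add: coeff_ev)

lemma ev_diff: "ev x (p - q) = ev x p - ev x q"
  by (rule poly_eqI) (simp add: coeff_ev)

lemma ev_mult: "ev x (p * q) = ev x p * ev x q"
  by (rule poly_eqI) (simp add: coeff_ev coeff_mult poly_sum)

lemma ev_const: "ev x [:c:] = [:poly c x:]"
  by (rule poly_eqI) (simp add: coeff_ev coeff_pCons split: nat.split)

lemma ev_smult: "ev x (smult c p) = smult (poly c x) (ev x p)"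
  by (rule poly_eqI) (simp add: coeff_ev)

lemma ev_Y: "ev x [:0,1:] = [:0,1:]"
  by (rule poly_eqI) (simp add: coeff_ev coeff_pCons split: nat.split)

lemma eval2_ev: "eval2 g (x, y) = poly (ev x g) y"
  by (simp add: eval2_def ev_def)

lemma eval2_add: "eval2 (p + q) z = eval2 p z + eval2 q z"
  by (cases z) (simp add: eval2_ev ev_add)
lemma eval2_diff: "eval2 (p - q) z = eval2 p z - eval2 q z"
  by (cases z) (simp add: eval2_ev ev_diff)
lemma eval2_mult: "eval2 (p * q) z = eval2 p z * eval2 q z"
  by (cases z) (simp add: eval2_ev ev_mult)
lemma eval2_C: "eval2 [:c:] z = poly c (fst z)"
  by (cases z) (simp add: eval2_ev ev_const)
lemma eval2_const: "eval2 [:[:c:]:] z = c"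
  by (simp add: eval2_C)
lemma eval2_X: "eval2 [:[:0,1:]:] z = fst z"
  by (simp add: eval2_C)
lemma eval2_Y: "eval2 [:0,1:] z = snd z"
  by (cases z) (simp add: eval2_ev ev_Y)

lemma eval2_zero: "eval2 0 z = 0"
  by (cases z) (simp add: eval2_def)

lemma eval2_dvd: "h dvd g \<Longrightarrow> eval2 h z = 0 \<Longrightarrow> eval2 g z = 0"
  by (auto simp: eval2_mult elim!: dvdE)

abbreviation L :: "'a::comm_ring_1 \<Rightarrow> 'a poly poly" where
  "L x0 \<equiv> [:[:-x0,1:]:]"

lemma L_dvd_iff:
  fixes p :: "'a::field poly poly"
  shows "L x0 dvd p \<longleftrightarrow> ev x0 p = 0"
proof
  assume "L x0 dvd p"
  then obtain q where "p = L x0 * q" by (elim dvdE)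
  then show "ev x0 p = 0" by (simp add: ev_smult)
next
  assume 0: "ev x0 p = 0"
  define q where "q = map_poly (\<lambda>c. c div [:-x0,1:]) p"
  have dv: "[:-x0,1:] dvd coeff p i" for i
    using 0 by (metis coeff_ev coeff_0 poly_eq_0_iff_dvd)
  have "p = L x0 * q"
  proof (rule poly_eqI)
    fix i
    show "coeff p i = coeff (L x0 * q) i"
    proof -
      have "coeff (L x0 * q) i = [:-x0,1:] * (coeff p i div [:-x0,1:])"
      proof -
        have "L x0 * q = smult [:-x0,1:] q" by simp
        then show ?thesis by (simp only: coeff_smult q_def coeff_map_poly) (simp add: coeff_map_poly)
      qed
      also have "\<dots> = coeff p i" using dv[of i] by (rule dvd_mult_div_cancel)
      finally show ?thesis by simp
    qed
  qed
  then show "L x0 dvd p" by (metis dvd_triv_left)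
qed

lemma L_not_unit: "\<not> is_unit (L (x0::'a::field))"
  by (auto simp: is_unit_poly_iff)

lemma L_ne0: "L (x0::'a::field) \<noteq> 0" by simp

lemma L_prime:
  fixes p q :: "'a::field poly poly"
  shows "L x0 dvd p * q \<Longrightarrow> L x0 dvd p \<or> L x0 dvd q"
  by (simp add: L_dvd_iff ev_mult)

lemma irr_ev_ne0:
  fixes h :: "'a::field poly poly"
  assumes irr: "irreducible h" and deg: "degree h > 0"
  shows "ev x h \<noteq> 0"
proof
  assume "ev x h = 0"
  then obtain q where hq: "h = L x * q" using L_dvd_iff by (metis dvdE)
  with irr have "is_unit (L x) \<or> is_unit q" by (rule irreducibleD)
  with L_not_unit have "is_unit q" by blast
  then obtain c where "q = [:c:]" by (auto simp: is_unit_poly_iff)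
  with hq deg show False by simp
qed

lemma L_mult_smult: "L x0 * r = smult [:-x0,1:] r" by simp

lemma split_root:
  fixes c :: "'a::alg_closed_field poly"
  assumes "c \<noteq> 0" "degree c > 0"
  obtains x0 c1 where "c = [:-x0,1:] * c1" "c1 \<noteq> 0" "degree c1 < degree c"
proof -
  obtain x0 where "poly c x0 = 0" using alg_closed_imp_poly_has_root assms(2) by blast
  then obtain c1 where c: "c = [:-x0,1:] * c1" by (metis dvdE poly_eq_0_iff_dvd)
  with assms have "c1 \<noteq> 0" by auto
  moreover have "degree c = 1 + degree c1" using c \<open>c1 \<noteq> 0\<close>
  proof -
    have "[:-x0,1:] \<noteq> (0::'a poly)" by simp
    then show ?thesis using c \<open>c1 \<noteq> 0\<close> degree_mult_eq[of "[:-x0,1:]" c1] by simp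
  qed
  ultimately show ?thesis using that c by auto
qed

lemma unit_C: "c \<noteq> 0 \<Longrightarrow> degree c = 0 \<Longrightarrow> is_unit [:c::'a::field poly:]"
  by (simp add: is_unit_const_poly_iff is_unit_iff_degree)

lemma irr_dvd_smult:
  fixes h g :: "'a::alg_closed_field poly poly"
  assumes irr: "irreducible h" and deg: "degree h > 0"
  shows "c \<noteq> 0 \<Longrightarrow> h dvd smult c g \<Longrightarrow> h dvd g"
proof (induction "degree c" arbitrary: c g rule: less_induct)
  case less
  show ?case
  proof (cases "degree c = 0")
    case True
    have u: "is_unit [:c:]" using True less.prems by (simp add: unit_C)
    have "smult c g = [:c:] * g" by simp
    with less.prems u show ?thesis by (metis dvd_mult_unit_iff')
  next
    case False
    then obtain x0 c1 where c: "c = [:-x0,1:] * c1" "c1 \<noteq> 0" "degree c1 < degree c"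
      using split_root less.prems by (metis neq0_conv)
    have "smult c g = L x0 * smult c1 g" using c by simp
    with less.prems obtain q where q: "L x0 * smult c1 g = h * q" by (metis dvdE)
    then have "L x0 dvd h * q" by (metis dvd_triv_left)
    then have "L x0 dvd h \<or> L x0 dvd q" by (rule L_prime)
    moreover have "\<not> L x0 dvd h" using irr_ev_ne0[OF irr deg] L_dvd_iff by blast
    ultimately obtain q1 where "q = L x0 * q1" by (metis dvdE)
    with q have "L x0 * smult c1 g = L x0 * (h * q1)" by (simp add: ac_simps)
    then have "smult c1 g = h * q1" using L_ne0 mult_left_cancel by blast
    then have "h dvd smult c1 g" by simp
    then show ?thesis using less.hyps c by blast
  qed
qed

lemma irr_dvd_factor:
  fixes h q r :: "'a::alg_closed_field poly poly"
  assumes irr: "irreducible h" and deg: "degree h > 0"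
  shows "c \<noteq> 0 \<Longrightarrow> smult c h = q * r \<Longrightarrow> degree r > 0 \<Longrightarrow> h dvd r"
proof (induction "degree c" arbitrary: c q r rule: less_induct)
  case less
  show ?case
  proof (cases "degree c = 0")
    case True
    have u: "is_unit [:c:]" using True less.prems by (simp add: unit_C)
    then obtain u' where u': "1 = [:c:] * u'" by (metis dvdE)
    have "h = u' * ([:c:] * h)" using u' by (metis mult.assoc mult.commute mult_1)
    also have "[:c:] * h = q * r" using less.prems by simp
    finally have hq: "h = (u' * q) * r" by (simp add: ac_simps)
    from irreducibleD[OF irr hq] have "is_unit (u' * q) \<or> is_unit r" .
    moreover have "\<not> is_unit r" using less.prems by (auto simp: is_unit_poly_iff)
    ultimately have "is_unit (u' * q)" by blast
    then show ?thesis using hq by (metis mult_unit_dvd_iff' dvd_refl)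
  next
    case False
    then obtain x0 c1 where c: "c = [:-x0,1:] * c1" "c1 \<noteq> 0" "degree c1 < degree c"
      using split_root less.prems by (metis neq0_conv)
    have e: "L x0 * smult c1 h = q * r" using c less.prems by simp
    then have "L x0 dvd q * r" by (metis dvd_triv_left)
    then have "L x0 dvd q \<or> L x0 dvd r" by (rule L_prime)
    then show ?thesis
    proof
      assume "L x0 dvd q"
      then obtain q1 where "q = L x0 * q1" by (metis dvdE)
      with e have "L x0 * smult c1 h = L x0 * (q1 * r)" by (simp add: ac_simps)
      then have "smult c1 h = q1 * r" using L_ne0 mult_left_cancel by blast
      then show ?thesis using less.hyps c less.prems by blast
    next
      assume "L x0 dvd r"
      then obtain r1 where r1: "r = L x0 * r1" by (metis dvdE)
      with e have "L x0 * smult c1 h = L x0 * (q * r1)" by (simp add: ac_simps)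
      then have "smult c1 h = q * r1" using L_ne0 mult_left_cancel by blast
      moreover have "degree r1 = degree r" using r1 by simp
      ultimately have "h dvd r1" using less.hyps c less.prems by metis
      then show ?thesis unfolding r1 by (rule dvd_mult)
    qed
  qed
qed

lemma zero_set_single: "zero_set {h} = {p. eval2 h p = 0}"
  by (simp add: zero_set_def)

lemma ideal_elim:
  fixes h g :: "'a::alg_closed_field poly poly"
  assumes irr: "irreducible h" and deg: "degree h > 0" and nd: "\<not> h dvd g"
  shows "\<exists>u v r. r \<noteq> 0 \<and> u * h + v * g = [:r:]"
proof (rule ccontr)
  assume no: "\<not> ?thesis"
  have g0: "g \<noteq> 0" using nd by auto
  define D where "D = {w. w \<noteq> 0 \<and> (\<exists>u v. w = u * h + v * g)}"
  have "g \<in> D" unfolding D_def using g0 by (auto intro: exI[of _ 0] exI[of _ 1])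
  then obtain w where wD: "w \<in> D" and wmin: "\<And>w'. w' \<in> D \<Longrightarrow> degree w \<le> degree w'"
    using ex_has_least_nat[of "\<lambda>w. w \<in> D" g degree] by blast
  from wD obtain u v where w0: "w \<noteq> 0" and wuv: "w = u * h + v * g" by (auto simp: D_def)
  have dw: "degree w > 0"
  proof (rule ccontr)
    assume "\<not> degree w > 0"
    then have "degree w = 0" by simp
    then have "w = [:coeff w 0:]" using degree_0_id[of w] by simp
    then show False using no w0 wuv by (metis pCons_eq_0_iff)
  qed
  have key: "\<exists>a q. a \<noteq> 0 \<and> smult a z = w * q" if zJ: "\<exists>u' v'. z = u' * h + v' * g" for z
  proof -
    obtain a q where aq: "a \<noteq> 0" "smult a z = w * q + pseudo_mod z w"
      using pseudo_mod(1)[OF w0, of z] by blast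
    have r: "pseudo_mod z w = 0 \<or> degree (pseudo_mod z w) < degree w"
      using pseudo_mod(2)[OF w0, of z] by blast
    obtain u' v' where z: "z = u' * h + v' * g" using zJ by blast
    define rm where "rm = pseudo_mod z w"
    have "rm = smult a z - w * q" using aq(2) unfolding rm_def by (metis add_diff_cancel_left')
    moreover have "smult a z - w * q = ([:a:] * u' - q * u) * h + ([:a:] * v' - q * v) * g"
      unfolding z wuv by (simp add: algebra_simps smult_add_right)
    ultimately have "pseudo_mod z w = ([:a:] * u' - q * u) * h + ([:a:] * v' - q * v) * g"
      unfolding rm_def by simp
    then have "pseudo_mod z w = 0"
      using r wmin[of "pseudo_mod z w"] unfolding D_def by fastforce
    then show ?thesis using aq by auto
  qed
  have "\<exists>u' v'. h = u' * h + v' * g" by (rule exI[of _ 1], rule exI[of _ 0]) simp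
  then obtain a q where aq: "a \<noteq> 0" "smult a h = w * q"
    using key[of h] by blast
  then have "h dvd w" using irr_dvd_factor[OF irr deg, of a q w] dw by (simp add: ac_simps)
  have "\<exists>u' v'. g = u' * h + v' * g" by (rule exI[of _ 0], rule exI[of _ 1]) simp
  then obtain a' q' where aq': "a' \<noteq> 0" "smult a' g = w * q'"
    using key[of g] by blast
  then have "h dvd smult a' g" using \<open>h dvd w\<close> by simp
  then have "h dvd g" using irr_dvd_smult[OF irr deg] aq' by blast
  with nd show False by blast
qed

lemma finite_fibres:
  assumes "finite A" "\<And>x. x \<in> A \<Longrightarrow> finite (B x)"
  shows "finite {(x, y). x \<in> A \<and> y \<in> B x}"
proof -
  have "{(x, y). x \<in> A \<and> y \<in> B x} = (\<Union>x\<in>A. (\<lambda>y. (x, y)) ` B x)" by auto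
  then show ?thesis using assms by simp
qed

lemma common_zeros_finite:
  fixes h g :: "'a::alg_closed_field poly poly"
  assumes irr: "irreducible h" and nd: "\<not> h dvd g"
  shows "finite (zero_set {h} \<inter> zero_set {g})"
proof (cases "degree h > 0")
  case True
  obtain u v r where r: "r \<noteq> 0" "u * h + v * g = [:r:]" using ideal_elim[OF irr True nd] by blast
  have "zero_set {h} \<inter> zero_set {g} \<subseteq> {(x, y). x \<in> {x. poly r x = 0} \<and> y \<in> {y. poly (ev x h) y = 0}}"
  proof
    fix z assume z: "z \<in> zero_set {h} \<inter> zero_set {g}"
    obtain x y where zxy: "z = (x, y)" by (cases z)
    have "eval2 h (x, y) = 0" "eval2 g (x, y) = 0" using z zxy by (auto simp: zero_set_def)
    moreover have "eval2 [:r:] (x, y) = eval2 u (x,y) * eval2 h (x,y) + eval2 v (x,y) * eval2 g (x,y)"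
      using r(2) by (metis eval2_add eval2_mult)
    ultimately have "poly r x = 0 \<and> poly (ev x h) y = 0" by (simp add: eval2_C flip: eval2_ev)
    then show "z \<in> {(x, y). x \<in> {x. poly r x = 0} \<and> y \<in> {y. poly (ev x h) y = 0}}" using zxy by simp
  qed
  moreover have "finite {(x, y). x \<in> {x. poly r x = 0} \<and> y \<in> {y. poly (ev x h) y = 0}}"
    by (rule finite_fibres) (use r(1) poly_roots_finite irr_ev_ne0[OF irr True] in auto)
  ultimately show ?thesis by (rule finite_subset)
next
  case False
  then have "degree h = 0" by simp
  then have hp: "h = [:coeff h 0:]" using degree_0_id[of h] by simp
  define p where "p = coeff h 0"
  have p0: "p \<noteq> 0" using irr hp p_def by (metis irreducible_def pCons_eq_0_iff)
  have "\<not> is_unit p" using irr hp p_def by (metis irreducible_def is_unit_const_poly_iff)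
  then have pdeg: "degree p > 0" using p0 is_unit_iff_degree by blast
  have gx: "ev x g \<noteq> 0" if px: "poly p x = 0" for x
  proof
    assume "ev x g = 0"
    then have Lg: "L x dvd g" using L_dvd_iff by blast
    obtain p1 where p1: "p = [:-x,1:] * p1" using px by (metis dvdE poly_eq_0_iff_dvd)
    have hL: "h = L x * [:p1:]" using hp p1 p_def by simp
    from irreducibleD[OF irr hL] L_not_unit have "is_unit [:p1:]" by blast
    then have "h dvd g" using Lg unfolding hL by (subst mult_unit_dvd_iff)
    with nd show False by blast
  qed
  have "zero_set {h} \<inter> zero_set {g} \<subseteq> {(x, y). x \<in> {x. poly p x = 0} \<and> y \<in> {y. poly (ev x g) y = 0}}"
  proof
    fix z assume z: "z \<in> zero_set {h} \<inter> zero_set {g}"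
    obtain x y where zxy: "z = (x, y)" by (cases z)
    have "eval2 h (x, y) = 0" "eval2 g (x, y) = 0" using z zxy by (auto simp: zero_set_def)
    then have "poly p x = 0 \<and> poly (ev x g) y = 0" using hp p_def
      by (metis eval2_C eval2_ev fst_conv)
    then show "z \<in> {(x, y). x \<in> {x. poly p x = 0} \<and> y \<in> {y. poly (ev x g) y = 0}}" using zxy by simp
  qed
  moreover have "finite {(x, y). x \<in> {x. poly p x = 0} \<and> y \<in> {y. poly (ev x g) y = 0}}"
    by (rule finite_fibres) (use p0 poly_roots_finite gx in auto)
  ultimately show ?thesis by (rule finite_subset)
qed

lemma zero_set_infinite:
  fixes h :: "'a::{alg_closed_field,field_char_0} poly poly"
  assumes irr: "irreducible h"
  shows "infinite (zero_set {h})"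
proof (cases "degree h > 0")
  case False
  then have "degree h = 0" by simp
  then have hp: "h = [:coeff h 0:]" using degree_0_id[of h] by simp
  define p where "p = coeff h 0"
  have p0: "p \<noteq> 0" using irr hp p_def by (metis irreducible_def pCons_eq_0_iff)
  have "\<not> is_unit p" using irr hp p_def by (metis irreducible_def is_unit_const_poly_iff)
  then have pdeg: "degree p > 0" using p0 is_unit_iff_degree by blast
  then obtain x0 where x0: "poly p x0 = 0" using alg_closed_imp_poly_has_root by blast
  have "eval2 h (x0, y) = 0" for y by (subst hp) (simp add: eval2_C x0 flip: p_def)
  then have "range (\<lambda>y. (x0, y)) \<subseteq> zero_set {h}"
    by (auto simp: zero_set_def)
  moreover have "infinite (range (\<lambda>y::'a. (x0, y)))"
    using infinite_UNIV_char_0 by (metis finite_imageD inj_onI prod.inject)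
  ultimately show ?thesis using finite_subset by blast
next
  case True
  define lc where "lc = lead_coeff h"
  have lc0: "lc \<noteq> 0" using True lc_def by auto
  have sub: "{x. poly lc x \<noteq> 0} \<subseteq> fst ` zero_set {h}"
  proof
    fix x assume "x \<in> {x. poly lc x \<noteq> 0}"
    then have "coeff (ev x h) (degree h) \<noteq> 0" by (simp add: coeff_ev lc_def)
    then have "degree (ev x h) \<ge> degree h" by (rule le_degree)
    then have "degree (ev x h) > 0" using True by linarith
    then obtain y where "poly (ev x h) y = 0" using alg_closed_imp_poly_has_root by blast
    then have "(x, y) \<in> zero_set {h}" by (simp add: zero_set_def eval2_ev)
    then show "x \<in> fst ` zero_set {h}" by force
  qed
  show ?thesis
  proof
    assume "finite (zero_set {h})"
    then have "finite {x. poly lc x \<noteq> 0}" using sub finite_subset by blast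
    moreover have "finite {x. poly lc x = 0}" using lc0 poly_roots_finite by blast
    ultimately have "finite (UNIV :: 'a set)"
      by (metis (mono_tags, lifting) Collect_disj_eq finite_Un UNIV_I mem_Collect_eq subsetI finite_subset)
    then show False using infinite_UNIV_char_0 by blast
  qed
qed

lemma eval2_all_zero:
  fixes g :: "'a::{field_char_0} poly poly"
  assumes "\<And>z. eval2 g z = 0"
  shows "g = 0"
proof -
  have "ev x g = 0" for x
    using assms by (metis eval2_ev poly_all_0_iff_0)
  then have "poly (coeff g i) x = 0" for i x by (metis coeff_ev coeff_0)
  then have "coeff g i = 0" for i by (metis poly_all_0_iff_0)
  then show ?thesis by (simp add: poly_eq_iff)
qed

lemma decomp:
  fixes g :: "'a::field poly poly"
  assumes "g \<noteq> 0"
  shows "\<exists>H. finite H \<and> (\<forall>h\<in>H. irreducible h) \<and> zero_set {g} = (\<Union>h\<in>H. zero_set {h})"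
  using assms
proof (induction "degree g + degree (lead_coeff g)" arbitrary: g rule: less_induct)
  case less
  show ?case
  proof (cases "is_unit g")
    case True
    then obtain c where c: "g = [:c:]" "is_unit c" by (auto simp: is_unit_poly_iff)
    then obtain c0 where c0: "c = [:c0:]" "c0 dvd 1" by (auto simp: is_unit_poly_iff)
    then have "c0 \<noteq> 0" by auto
    then have "zero_set {g} = {}" using c c0 by (auto simp: zero_set_def eval2_C)
    then show ?thesis by (intro exI[of _ "{}"]) auto
  next
    case nu: False
    show ?thesis
    proof (cases "irreducible g")
      case True
      then show ?thesis by (intro exI[of _ "{g}"]) auto
    next
      case False
      with nu less.prems obtain a b where ab: "g = a * b" "\<not> is_unit a" "\<not> is_unit b"
        by (auto simp: irreducible_def)
      have a0: "a \<noteq> 0" "b \<noteq> 0" using ab less.prems by auto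
      have pos: "degree q + degree (lead_coeff q) > 0" if "q \<noteq> 0" "\<not> is_unit q" for q :: "'a poly poly"
      proof (rule ccontr)
        assume "\<not> ?thesis"
        then have d: "degree q = 0" "degree (lead_coeff q) = 0" by auto
        then have "q = [:lead_coeff q:]" by (metis degree_0_id)
        moreover have "lead_coeff q \<noteq> 0" using that by simp
        then have "is_unit (lead_coeff q)" using d is_unit_iff_degree by blast
        ultimately have "is_unit q" by (metis is_unit_const_poly_iff)
        with that show False by blast
      qed
      have m: "degree g + degree (lead_coeff g) =
          (degree a + degree (lead_coeff a)) + (degree b + degree (lead_coeff b))"
      proof -
        have "lead_coeff a \<noteq> 0" "lead_coeff b \<noteq> 0" using a0 by auto
        then have "degree (lead_coeff a * lead_coeff b) = degree (lead_coeff a) + degree (lead_coeff b)"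
          by (rule degree_mult_eq)
        moreover have "degree (a * b) = degree a + degree b" using a0 by (rule degree_mult_eq)
        moreover have "lead_coeff (a * b) = lead_coeff a * lead_coeff b" by (rule lead_coeff_mult)
        ultimately show ?thesis using ab(1) by (simp del: lead_coeff_mult)
      qed
      obtain Ha where Ha: "finite Ha" "\<forall>h\<in>Ha. irreducible h" "zero_set {a} = (\<Union>h\<in>Ha. zero_set {h})"
        using less.hyps[of a] m pos[of b] a0 ab by fastforce
      obtain Hb where Hb: "finite Hb" "\<forall>h\<in>Hb. irreducible h" "zero_set {b} = (\<Union>h\<in>Hb. zero_set {h})"
        using less.hyps[of b] m pos[of a] a0 ab by fastforce
      have "zero_set {g} = zero_set {a} \<union> zero_set {b}"
        using ab by (auto simp: zero_set_def eval2_mult)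
      then show ?thesis using Ha Hb by (intro exI[of _ "Ha \<union> Hb"]) auto
    qed
  qed
qed

lemma closed_Un:
  fixes S T :: "('a::idom \<times> 'a) set"
  assumes "zar_closed S" "zar_closed T"
  shows "zar_closed (S \<union> T)"
proof -
  obtain P Q where PQ: "S = zero_set P" "T = zero_set Q" using assms by (auto simp: zar_closed_def)
  have "S \<union> T = zero_set {p * q |p q. p \<in> P \<and> q \<in> Q}"
  proof (intro set_eqI iffI)
    fix z assume "z \<in> S \<union> T"
    then show "z \<in> zero_set {p * q |p q. p \<in> P \<and> q \<in> Q}"
      unfolding PQ zero_set_def by (auto simp: eval2_mult)
  next
    fix z assume z: "z \<in> zero_set {p * q |p q. p \<in> P \<and> q \<in> Q}"
    show "z \<in> S \<union> T"
    proof (rule ccontr)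
      assume "z \<notin> S \<union> T"
      then obtain p q where "p \<in> P" "eval2 p z \<noteq> 0" "q \<in> Q" "eval2 q z \<noteq> 0"
        unfolding PQ zero_set_def by auto
      moreover have "eval2 (p * q) z = 0" using z \<open>p \<in> P\<close> \<open>q \<in> Q\<close> unfolding zero_set_def by blast
      ultimately show False by (simp add: eval2_mult)
    qed
  qed
  then show ?thesis by (auto simp: zar_closed_def)
qed

lemma zclosed_empty: "zar_closed ({} :: ('a::comm_ring_1 \<times> 'a) set)"
proof -
  have "zero_set {[:[:1:]:]} = ({} :: ('a \<times> 'a) set)" by (auto simp: zero_set_def eval2_const)
  then show ?thesis unfolding zar_closed_def by metis
qed

lemma zclosed_UNIV: "zar_closed (UNIV :: ('a::comm_ring_1 \<times> 'a) set)"
  unfolding zar_closed_def by (rule exI[of _ "{}"]) (simp add: zero_set_def)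

lemma closed_zero_set: "zar_closed (zero_set P)"
  by (auto simp: zar_closed_def)

lemma closed_Inter:
  fixes F :: "('a::comm_ring_1 \<times> 'a) set set"
  assumes "\<And>S. S \<in> F \<Longrightarrow> zar_closed S"
  shows "zar_closed (\<Inter> F)"
proof -
  define Q where "Q S = (SOME P. S = zero_set P)" for S :: "('a \<times> 'a) set"
  have Q: "S = zero_set (Q S)" if "S \<in> F" for S
    using assms[OF that] unfolding zar_closed_def Q_def by (metis (mono_tags) someI)
  have "\<Inter> F = zero_set (\<Union>S\<in>F. Q S)"
  proof (intro set_eqI iffI)
    fix z assume z: "z \<in> \<Inter> F"
    show "z \<in> zero_set (\<Union>S\<in>F. Q S)" unfolding zero_set_def
    proof (intro CollectI ballI)
      fix g assume "g \<in> (\<Union>S\<in>F. Q S)"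
      then obtain S where S: "S \<in> F" "g \<in> Q S" by blast
      then have "z \<in> zero_set (Q S)" using z Q by blast
      then show "eval2 g z = 0" using S unfolding zero_set_def by blast
    qed
  next
    fix z assume z: "z \<in> zero_set (\<Union>S\<in>F. Q S)"
    show "z \<in> \<Inter> F"
    proof
      fix S assume S: "S \<in> F"
      have "z \<in> zero_set (Q S)" using z S unfolding zero_set_def by blast
      then show "z \<in> S" using Q[OF S] by simp
    qed
  qed
  then show ?thesis by (simp add: closed_zero_set)
qed

lemma closure_closed: "zar_closed (zar_closure S)"
  unfolding zar_closure_def by (rule closed_Inter) auto

lemma closure_sub: "S \<subseteq> zar_closure S"
  unfolding zar_closure_def by auto

lemma closure_min: "zar_closed T \<Longrightarrow> S \<subseteq> T \<Longrightarrow> zar_closure S \<subseteq> T"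
  unfolding zar_closure_def by auto

lemma closure_mono: "S \<subseteq> T \<Longrightarrow> zar_closure S \<subseteq> zar_closure T"
  by (meson closure_closed closure_min closure_sub order_trans)

lemma eval2_lin: "eval2 [:[:c:],1:] z = c + snd z"
  by (cases z) (simp add: eval2_def map_poly_pCons)

lemma closed_point: "zar_closed {(x0::'a::idom, y0)}"
proof -
  have "{(x0, y0)} = zero_set {[:[:-x0,1:]:], [:[:-y0:],1:]}"
    by (auto simp: zero_set_def eval2_C eval2_lin)
  then show ?thesis by (simp add: closed_zero_set)
qed

lemma closed_finite:
  fixes S :: "('a::idom \<times> 'a) set"
  shows "finite S \<Longrightarrow> zar_closed S"
proof (induction rule: finite_induct)
  case empty
  then show ?case by (rule zclosed_empty)
next
  case (insert x F)
  then show ?case using closed_Un[OF closed_point[of "fst x" "snd x"] insert.IH] by simp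
qed

lemma closed_Union_finite:
  fixes F :: "('a::idom \<times> 'a) set set"
  shows "finite F \<Longrightarrow> (\<And>S. S \<in> F \<Longrightarrow> zar_closed S) \<Longrightarrow> zar_closed (\<Union> F)"
proof (induction rule: finite_induct)
  case empty
  then show ?case by (simp add: zclosed_empty)
next
  case (insert x F)
  then show ?case by (simp add: closed_Un)
qed

lemma irreducible_Union:
  fixes F :: "('a::idom \<times> 'a) set set"
  assumes "zar_irreducible Z"
  shows "finite F \<Longrightarrow> (\<And>S. S \<in> F \<Longrightarrow> zar_closed S) \<Longrightarrow> Z \<subseteq> \<Union> F \<Longrightarrow> \<exists>S\<in>F. Z \<subseteq> S"
proof (induction rule: finite_induct)
  case empty
  then show ?case using assms by (auto simp: zar_irreducible_def)
next
  case (insert S F)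
  have "zar_closed (\<Union> F)" using insert by (intro closed_Union_finite) auto
  moreover have "Z \<subseteq> S \<union> \<Union> F" using insert by auto
  ultimately have "Z \<subseteq> S \<or> Z \<subseteq> \<Union> F" using assms insert.prems unfolding zar_irreducible_def by auto
  then show ?case using insert by auto
qed

lemma vanish_on_curve:
  fixes h g :: "'a::alg_closed_field poly poly"
  assumes irr: "irreducible h" and A: "A \<subseteq> zero_set {h}" "infinite A"
    and van: "\<And>z. z \<in> A \<Longrightarrow> eval2 g z = 0"
  shows "h dvd g"
proof (rule ccontr)
  assume "\<not> h dvd g"
  then have "finite (zero_set {h} \<inter> zero_set {g})" using common_zeros_finite irr by blast
  moreover have "A \<subseteq> zero_set {h} \<inter> zero_set {g}" using A van by (auto simp: zero_set_def)
  ultimately show False using A finite_subset by blast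
qed

lemma dichotomy:
  fixes h :: "'a::alg_closed_field poly poly"
  assumes irr: "irreducible h" and T: "zar_closed T"
  shows "zero_set {h} \<subseteq> T \<or> finite (zero_set {h} \<inter> T)"
proof (rule ccontr)
  assume "\<not> ?thesis"
  then have inf: "infinite (zero_set {h} \<inter> T)" and ns: "\<not> zero_set {h} \<subseteq> T" by auto
  obtain P where P: "T = zero_set P" using T by (auto simp: zar_closed_def)
  have "zero_set {h} \<subseteq> T"
  proof
    fix z assume z: "z \<in> zero_set {h}"
    have "eval2 g z = 0" if g: "g \<in> P" for g
    proof -
      have "h dvd g" using vanish_on_curve[OF irr _ inf, of g] g P by (auto simp: zero_set_def)
      then show ?thesis using z by (cases z) (auto simp: zero_set_def intro: eval2_dvd)
    qed
    then show "z \<in> T" using P by (auto simp: zero_set_def)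
  qed
  with ns show False by blast
qed

lemma curve_irreducible:
  fixes h :: "'a::{alg_closed_field,field_char_0} poly poly"
  assumes irr: "irreducible h"
  shows "zar_irreducible (zero_set {h})"
  unfolding zar_irreducible_def
proof (intro conjI allI impI)
  show "zero_set {h} \<noteq> {}" using zero_set_infinite[OF irr] by auto
  fix Z1 Z2 assume Z: "zar_closed Z1 \<and> zar_closed Z2 \<and> zero_set {h} \<subseteq> Z1 \<union> Z2"
  show "zero_set {h} \<subseteq> Z1 \<or> zero_set {h} \<subseteq> Z2"
  proof (rule ccontr)
    assume "\<not> ?thesis"
    then have "finite (zero_set {h} \<inter> Z1)" "finite (zero_set {h} \<inter> Z2)"
      using dichotomy[OF irr] Z by blast+
    then have "finite (zero_set {h})" using Z
      by (metis Int_Un_distrib Int_absorb2 finite_Un)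
    then show False using zero_set_infinite[OF irr] by blast
  qed
qed

lemma UNIV_irreducible: "zar_irreducible (UNIV :: ('a::field_char_0 \<times> 'a) set)"
  unfolding zar_irreducible_def
proof (intro conjI allI impI)
  show "(UNIV :: ('a \<times> 'a) set) \<noteq> {}" by simp
  fix Z1 Z2 :: "('a \<times> 'a) set" assume Z: "zar_closed Z1 \<and> zar_closed Z2 \<and> UNIV \<subseteq> Z1 \<union> Z2"
  obtain P1 P2 where P: "Z1 = zero_set P1" "Z2 = zero_set P2" using Z by (auto simp: zar_closed_def)
  show "UNIV \<subseteq> Z1 \<or> UNIV \<subseteq> Z2"
  proof (rule ccontr)
    assume "\<not> ?thesis"
    then obtain z1 z2 where "z1 \<notin> Z1" "z2 \<notin> Z2" by auto
    then obtain g1 g2 where g: "g1 \<in> P1" "eval2 g1 z1 \<noteq> 0" "g2 \<in> P2" "eval2 g2 z2 \<noteq> 0"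
      using P by (auto simp: zero_set_def)
    have "eval2 (g1 * g2) z = 0" for z
      using Z g P by (auto simp: zero_set_def eval2_mult)
    then have "g1 * g2 = 0" by (rule eval2_all_zero)
    then have "g1 = 0 \<or> g2 = 0" by simp
    then show False using g by (auto simp: eval2_zero)
  qed
qed

inductive_set pf :: "('b \<Rightarrow> 'a::comm_ring_1) set \<Rightarrow> ('b \<Rightarrow> 'a) set" for G where
  pf_const: "(\<lambda>_. c) \<in> pf G"
| pf_gen: "g \<in> G \<Longrightarrow> g \<in> pf G"
| pf_add: "p \<in> pf G \<Longrightarrow> q \<in> pf G \<Longrightarrow> (\<lambda>z. p z + q z) \<in> pf G"
| pf_mult: "p \<in> pf G \<Longrightarrow> q \<in> pf G \<Longrightarrow> (\<lambda>z. p z * q z) \<in> pf G"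

lemma pf_diff: "p \<in> pf G \<Longrightarrow> q \<in> pf G \<Longrightarrow> (\<lambda>z. p z - q z) \<in> pf G"
proof -
  assume "p \<in> pf G" "q \<in> pf G"
  then have "(\<lambda>z. p z + (\<lambda>_. -1) z * q z) \<in> pf G" by (intro pf_add pf_mult pf_const)
  then show ?thesis by simp
qed

lemma pf_pow: "p \<in> pf G \<Longrightarrow> (\<lambda>z. p z ^ n) \<in> pf G"
proof (induction n)
  case 0
  then show ?case using pf_const[of 1] by simp
next
  case (Suc n)
  then show ?case using pf_mult[OF Suc.prems Suc.IH] by simp
qed

abbreviation G2 :: "('a \<times> 'a \<Rightarrow> 'a) set" where "G2 \<equiv> {fst, snd}"

lemma pf2_eval2: "p \<in> pf G2 \<Longrightarrow> \<exists>H. p = eval2 H"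
proof (induction rule: pf.induct)
  case (pf_const c)
  then show ?case by (intro exI[of _ "[:[:c:]:]"]) (simp add: fun_eq_iff eval2_const)
next
  case (pf_gen g)
  then consider "g = fst" | "g = snd" by blast
  then show ?case
  proof cases
    case 1
    then show ?thesis by (intro exI[of _ "[:[:0,1:]:]"]) (simp add: fun_eq_iff eval2_X)
  next
    case 2
    then show ?thesis by (intro exI[of _ "[:0,1:]"]) (simp add: fun_eq_iff eval2_Y)
  qed
next
  case (pf_add p q)
  then obtain H1 H2 where "p = eval2 H1" "q = eval2 H2" by blast
  then show ?case by (intro exI[of _ "H1 + H2"]) (simp add: fun_eq_iff eval2_add)
next
  case (pf_mult p q)
  then obtain H1 H2 where "p = eval2 H1" "q = eval2 H2" by blast
  then show ?case by (intro exI[of _ "H1 * H2"]) (simp add: fun_eq_iff eval2_mult)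
qed

lemma poly_pf: "(\<lambda>z. poly c (fst z)) \<in> pf G2"
proof (induction c)
  case 0
  then show ?case using pf_const[of 0] by simp
next
  case (pCons a c)
  have "(\<lambda>z. (\<lambda>_. a) z + fst z * poly c (fst z)) \<in> pf G2"
    by (intro pf_add pf_mult pf_const pf_gen pCons.IH) auto
  then show ?case by simp
qed

lemma eval2_pCons: "eval2 (pCons c H) z = poly c (fst z) + snd z * eval2 H z"
proof -
  obtain x y where z: "z = (x, y)" by (cases z)
  have "ev x (pCons c H) = pCons (poly c x) (ev x H)"
    by (rule poly_eqI) (simp add: coeff_ev coeff_pCons split: nat.split)
  then show ?thesis by (simp add: z eval2_ev)
qed

lemma eval2_pf: "eval2 H \<in> pf G2"
proof (induction H)
  case 0
  then show ?case using pf_const[of 0] by (simp add: eval2_zero[abs_def])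
next
  case (pCons c H)
  have "(\<lambda>z. poly c (fst z) + snd z * eval2 H z) \<in> pf G2"
    by (intro pf_add pf_mult poly_pf pf_gen pCons.IH) auto
  then show ?case by (simp add: eval2_pCons[abs_def])
qed

lemma pf_comp:
  assumes "p \<in> pf G2" "\<phi>1 \<in> pf G" "\<phi>2 \<in> pf G"
  shows "(\<lambda>z. p (\<phi>1 z, \<phi>2 z)) \<in> pf G"
  using assms(1)
proof (induction rule: pf.induct)
  case (pf_const c)
  then show ?case by (rule pf.pf_const)
next
  case (pf_gen g)
  then show ?case using assms by auto
next
  case (pf_add p q)
  then show ?case using pf.pf_add[OF pf_add.IH] by simp
next
  case (pf_mult p q)
  then show ?case using pf.pf_mult[OF pf_mult.IH] by simp
qed

abbreviation G3 :: "(('a \<times> 'a) \<times> 'a \<Rightarrow> 'a) set" where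
  "G3 \<equiv> {\<lambda>z. fst (fst z), \<lambda>z. snd (fst z), snd}"

lemma parity:
  "P \<in> pf G3 \<Longrightarrow> \<exists>Q0 Q1. Q0 \<in> pf G3 \<and> Q1 \<in> pf G3 \<and> (\<forall>y t. P (y, t) = Q0 (y, t^2) + t * Q1 (y, t^2))"
proof (induction rule: pf.induct)
  case (pf_const c)
  then show ?case by (intro exI[of _ "\<lambda>_. c"] exI[of _ "\<lambda>_. 0"]) (auto intro: pf.pf_const)
next
  case (pf_gen g)
  then consider "g = (\<lambda>z. fst (fst z))" | "g = (\<lambda>z. snd (fst z))" | "g = snd" by blast
  then show ?case
  proof cases
    case 1
    then show ?thesis by (intro exI[of _ g] exI[of _ "\<lambda>_. 0"]) (auto intro: pf.pf_const pf.pf_gen)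
  next
    case 2
    then show ?thesis by (intro exI[of _ g] exI[of _ "\<lambda>_. 0"]) (auto intro: pf.pf_const pf.pf_gen)
  next
    case 3
    then show ?thesis by (intro exI[of _ "\<lambda>_. 0"] exI[of _ "\<lambda>_. 1"]) (auto intro: pf.pf_const)
  qed
next
  case (pf_add p q)
  then obtain A0 A1 B0 B1 where AB: "A0 \<in> pf G3" "A1 \<in> pf G3" "B0 \<in> pf G3" "B1 \<in> pf G3"
    "\<forall>y t. p (y, t) = A0 (y, t^2) + t * A1 (y, t^2)" "\<forall>y t. q (y, t) = B0 (y, t^2) + t * B1 (y, t^2)"
    by blast
  show ?case
    by (rule exI[of _ "\<lambda>z. A0 z + B0 z"], rule exI[of _ "\<lambda>z. A1 z + B1 z"])
       (use AB in \<open>auto intro: pf.pf_add simp: algebra_simps\<close>)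
next
  case (pf_mult p q)
  then obtain A0 A1 B0 B1 where AB: "A0 \<in> pf G3" "A1 \<in> pf G3" "B0 \<in> pf G3" "B1 \<in> pf G3"
    "\<forall>y t. p (y, t) = A0 (y, t^2) + t * A1 (y, t^2)" "\<forall>y t. q (y, t) = B0 (y, t^2) + t * B1 (y, t^2)"
    by blast
  have s: "snd \<in> pf G3" by (rule pf.pf_gen) auto
  show ?case
    by (rule exI[of _ "\<lambda>z. A0 z * B0 z + snd z * (A1 z * B1 z)"],
        rule exI[of _ "\<lambda>z. A0 z * B1 z + A1 z * B0 z"])
       (use AB s in \<open>auto intro!: pf.pf_add pf.pf_mult simp: algebra_simps power2_eq_square\<close>)
qed

lemma subst_pf:
  fixes N :: "'a::field \<times> 'a \<Rightarrow> 'a"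
  assumes N: "N \<in> pf G2"
  shows "Q \<in> pf G3 \<Longrightarrow> \<exists>k G. G \<in> pf G2 \<and> (\<forall>y. N y \<noteq> 0 \<longrightarrow> N y ^ k * Q (y, D / N y) = G y)"
proof (induction rule: pf.induct)
  case (pf_const c)
  then show ?case by (intro exI[of _ 0] exI[of _ "\<lambda>_. c"]) (auto intro: pf.pf_const)
next
  case (pf_gen g)
  then consider "g = (\<lambda>z. fst (fst z))" | "g = (\<lambda>z. snd (fst z))" | "g = snd" by blast
  then show ?case
  proof cases
    case 1
    then show ?thesis by (intro exI[of _ 0] exI[of _ fst]) (auto intro: pf.pf_gen)
  next
    case 2
    then show ?thesis by (intro exI[of _ 0] exI[of _ snd]) (auto intro: pf.pf_gen)
  next
    case 3
    then show ?thesis by (intro exI[of _ 1] exI[of _ "\<lambda>_. D"]) (auto intro: pf.pf_const)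
  qed
next
  case (pf_add p q)
  then obtain ka Ga kb Gb where AB: "Ga \<in> pf G2" "Gb \<in> pf G2"
    "\<forall>y. N y \<noteq> 0 \<longrightarrow> N y ^ ka * p (y, D / N y) = Ga y"
    "\<forall>y. N y \<noteq> 0 \<longrightarrow> N y ^ kb * q (y, D / N y) = Gb y"
    by blast
  have "(\<lambda>y. N y ^ kb * Ga y + N y ^ ka * Gb y) \<in> pf G2"
    using AB N by (intro pf.pf_add pf.pf_mult pf_pow) auto
  moreover have "N y ^ (ka + kb) * (p (y, D / N y) + q (y, D / N y)) = N y ^ kb * Ga y + N y ^ ka * Gb y"
    if "N y \<noteq> 0" for y
  proof -
    have e1: "N y ^ ka * p (y, D / N y) = Ga y" using AB(3) that by blast
    have e2: "N y ^ kb * q (y, D / N y) = Gb y" using AB(4) that by blast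
    have "N y ^ (ka + kb) * (p (y, D / N y) + q (y, D / N y)) =
        N y ^ kb * (N y ^ ka * p (y, D / N y)) + N y ^ ka * (N y ^ kb * q (y, D / N y))"
      by (simp add: power_add algebra_simps)
    then show ?thesis by (simp only: e1 e2)
  qed
  ultimately show ?case by blast
next
  case (pf_mult p q)
  then obtain ka Ga kb Gb where AB: "Ga \<in> pf G2" "Gb \<in> pf G2"
    "\<forall>y. N y \<noteq> 0 \<longrightarrow> N y ^ ka * p (y, D / N y) = Ga y"
    "\<forall>y. N y \<noteq> 0 \<longrightarrow> N y ^ kb * q (y, D / N y) = Gb y"
    by blast
  have "(\<lambda>y. Ga y * Gb y) \<in> pf G2"
    using AB by (intro pf.pf_mult) auto
  moreover have "N y ^ (ka + kb) * (p (y, D / N y) * q (y, D / N y)) = Ga y * Gb y"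
    if "N y \<noteq> 0" for y
  proof -
    have e1: "N y ^ ka * p (y, D / N y) = Ga y" using AB(3) that by blast
    have e2: "N y ^ kb * q (y, D / N y) = Gb y" using AB(4) that by blast
    have "N y ^ (ka + kb) * (p (y, D / N y) * q (y, D / N y)) =
        (N y ^ ka * p (y, D / N y)) * (N y ^ kb * q (y, D / N y))"
      by (simp add: power_add algebra_simps)
    then show ?thesis by (simp only: e1 e2)
  qed
  ultimately show ?case by blast
qed

lemma mem_conchB_iff:
  fixes f :: "'a::field poly poly"
  shows "((x1, x2), (y1, y2), w) \<in> conchB f a b d \<longleftrightarrow>
    eval2 f (y1, y2) = 0 \<and> (y1 - a)^2 + (y2 - b)^2 \<noteq> 0 \<and> w = 1 / ((y1 - a)^2 + (y2 - b)^2) \<and>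
    (\<exists>t. t^2 * ((y1 - a)^2 + (y2 - b)^2) = d^2 \<and> x1 = y1 + t * (y1 - a) \<and> x2 = y2 + t * (y2 - b))"
    (is "?L \<longleftrightarrow> ?R")
proof
  assume L: ?L
  then have f: "eval2 f (y1, y2) = 0" and dist: "(x1 - y1)^2 + (x2 - y2)^2 = d^2"
    and col: "(y2 - b) * (x1 - y1) - (y1 - a) * (x2 - y2) = 0"
    and w: "w * ((y1 - a)^2 + (y2 - b)^2) = 1" by (auto simp: conchB_def)
  define N where "N = (y1 - a)^2 + (y2 - b)^2"
  have N0: "N \<noteq> 0" using w N_def by auto
  have wN: "w = 1 / N" using w N0 N_def by (simp add: field_simps)
  obtain t where t: "x1 - y1 = t * (y1 - a)" "x2 - y2 = t * (y2 - b)"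
  proof (cases "y1 = a")
    case True
    then have "y2 \<noteq> b" using N0 N_def by auto
    moreover have "x1 = y1" using col True \<open>y2 \<noteq> b\<close> by simp
    ultimately show ?thesis using that[of "(x2 - y2) / (y2 - b)"] True by simp
  next
    case False
    have "x2 - y2 = (x1 - y1) / (y1 - a) * (y2 - b)" using col False
      by (simp add: field_simps)
    then show ?thesis using that[of "(x1 - y1) / (y1 - a)"] False by simp
  qed
  have "t^2 * N = (t * (y1 - a))^2 + (t * (y2 - b))^2" unfolding N_def by (simp only: power_mult_distrib distrib_left)
  also have "\<dots> = d^2" using dist t by simp
  finally have "t^2 * N = d^2" .
  then show ?R using f N0 wN t N_def by (auto intro!: exI[of _ t] simp: algebra_simps)
next
  assume ?R
  then obtain t where R: "eval2 f (y1, y2) = 0" "(y1 - a)^2 + (y2 - b)^2 \<noteq> 0"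
    "w = 1 / ((y1 - a)^2 + (y2 - b)^2)" "t^2 * ((y1 - a)^2 + (y2 - b)^2) = d^2"
    "x1 = y1 + t * (y1 - a)" "x2 = y2 + t * (y2 - b)" by blast
  have e1: "x1 - y1 = t * (y1 - a)" "x2 - y2 = t * (y2 - b)" using R by simp_all
  have "(x1 - y1)^2 + (x2 - y2)^2 = t^2 * ((y1 - a)^2 + (y2 - b)^2)"
    unfolding e1 by (simp only: power_mult_distrib distrib_left)
  then have d1: "(x1 - y1)^2 + (x2 - y2)^2 = d^2" using R by simp
  have d2: "(y2 - b) * (x1 - y1) - (y1 - a) * (x2 - y2) = 0" unfolding e1 by (simp add: algebra_simps)
  have d3: "w * ((y1 - a)^2 + (y2 - b)^2) = 1" using R(2,3) by simp
  show ?L using R(1) d1 d2 d3 by (simp add: conchB_def)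
qed

definition Nf :: "'a::comm_ring_1 \<Rightarrow> 'a \<Rightarrow> 'a \<times> 'a \<Rightarrow> 'a" where
  "Nf a b y = (fst y - a)^2 + (snd y - b)^2"

definition ptf :: "'a::comm_ring_1 \<Rightarrow> 'a \<Rightarrow> 'a \<times> 'a \<Rightarrow> 'a \<Rightarrow> 'a \<times> 'a" where
  "ptf a b y t = (fst y + t * (fst y - a), snd y + t * (snd y - b))"

lemma B_mem:
  fixes f :: "'a::field poly poly"
  shows "e \<in> conchB f a b d \<longleftrightarrow> eval2 f (pi2 e) = 0 \<and> Nf a b (pi2 e) \<noteq> 0 \<and>
     snd (snd e) = 1 / Nf a b (pi2 e) \<and> (\<exists>t. t^2 * Nf a b (pi2 e) = d^2 \<and> pi1 e = ptf a b (pi2 e) t)"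
proof -
  obtain x1 x2 y1 y2 w where e: "e = ((x1, x2), (y1, y2), w)" by (metis prod.collapse)
  show ?thesis unfolding e mem_conchB_iff by (simp add: Nf_def ptf_def pi1_def pi2_def)
qed

lemma B_intro:
  fixes f :: "'a::field poly poly"
  assumes "eval2 f y = 0" "Nf a b y \<noteq> 0" "t^2 * Nf a b y = d^2"
  shows "(ptf a b y t, y, 1 / Nf a b y) \<in> conchB f a b d"
  using assms by (subst B_mem) (auto simp: pi1_def pi2_def)

lemma sqrt_ex: "\<exists>t::'a::alg_closed_field. t^2 = s"
proof -
  have "degree [:-s, 0, 1:] > 0" by simp
  then obtain t where "poly [:-s, 0, 1:] t = 0" using alg_closed_imp_poly_has_root by blast
  then show ?thesis by (auto simp: power2_eq_square algebra_simps)
qed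

lemma Npf: "Nf a b \<in> pf G2"
proof -
  have "(\<lambda>z. (fst z - a)^2 + (snd z - b)^2) \<in> pf G2"
    by (intro pf_add pf_pow pf_diff pf_const pf_gen) auto
  then show ?thesis by (simp add: Nf_def[abs_def])
qed

lemma transfer:
  fixes f :: "'a::{alg_closed_field, field_char_0} poly poly"
  assumes irr: "irreducible f" and d0: "d \<noteq> 0"
    and U: "U \<subseteq> zero_set {f}" "infinite U" "\<And>y. y \<in> U \<Longrightarrow> Nf a b y \<noteq> 0"
    and F: "F \<in> pf G2"
    and van: "\<And>y t. y \<in> U \<Longrightarrow> t^2 * Nf a b y = d^2 \<Longrightarrow> F (ptf a b y t) = 0"
    and y0: "y0 \<in> zero_set {f}" "Nf a b y0 \<noteq> 0" "t0^2 * Nf a b y0 = d^2"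
  shows "F (ptf a b y0 t0) = 0"
proof -
  let ?N = "Nf a b"
  define P where "P z = F (ptf a b (fst z) (snd z))" for z :: "('a \<times> 'a) \<times> 'a"
  have phi1: "(\<lambda>z::('a \<times> 'a) \<times> 'a. fst (fst z) + snd z * (fst (fst z) - a)) \<in> pf G3"
    by (intro pf_add pf_mult pf_diff pf_const pf_gen) auto
  have phi2: "(\<lambda>z::('a \<times> 'a) \<times> 'a. snd (fst z) + snd z * (snd (fst z) - b)) \<in> pf G3"
    by (intro pf_add pf_mult pf_diff pf_const pf_gen) auto
  have "P \<in> pf G3" using pf_comp[OF F phi1 phi2] by (simp add: P_def[abs_def] ptf_def)
  then obtain Q0 Q1 where Q: "Q0 \<in> pf G3" "Q1 \<in> pf G3" "\<And>y t. P (y, t) = Q0 (y, t^2) + t * Q1 (y, t^2)"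
    using parity by blast
  obtain k0 G0 where G0: "G0 \<in> pf G2" "\<And>y. ?N y \<noteq> 0 \<Longrightarrow> ?N y ^ k0 * Q0 (y, d^2 / ?N y) = G0 y"
    using subst_pf[OF Npf Q(1), of a b "d^2"] by blast
  obtain k1 G1 where G1: "G1 \<in> pf G2" "\<And>y. ?N y \<noteq> 0 \<Longrightarrow> ?N y ^ k1 * Q1 (y, d^2 / ?N y) = G1 y"
    using subst_pf[OF Npf Q(2), of a b "d^2"] by blast
  obtain H0 where H0: "G0 = eval2 H0" using pf2_eval2[OF G0(1)] by blast
  obtain H1 where H1: "G1 = eval2 H1" using pf2_eval2[OF G1(1)] by blast
  have zeroU: "Q0 (y, d^2 / ?N y) = 0 \<and> Q1 (y, d^2 / ?N y) = 0" if y: "y \<in> U" for y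
  proof -
    define s where "s = d^2 / ?N y"
    obtain t where t: "t^2 = s" using sqrt_ex by blast
    have Ny: "?N y \<noteq> 0" using U(3) y by blast
    have s0: "s \<noteq> 0" using d0 Ny by (simp add: s_def)
    then have t0: "t \<noteq> 0" using t by auto
    have ts: "t^2 * ?N y = d^2" "(-t)^2 * ?N y = d^2" using t Ny by (simp_all add: s_def)
    have "P (y, t) = 0" "P (y, -t) = 0" using van[OF y ts(1)] van[OF y ts(2)] by (simp_all add: P_def)
    then have e: "Q0 (y, s) + t * Q1 (y, s) = 0" "Q0 (y, s) - t * Q1 (y, s) = 0"
      using Q(3)[of y t] Q(3)[of y "-t"] t by simp_all
    then have "2 * Q0 (y, s) = 0" by (simp add: algebra_simps)
    then have q0: "Q0 (y, s) = 0" by simp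
    then have "t * Q1 (y, s) = 0" using e by simp
    then have "Q1 (y, s) = 0" using t0 by simp
    then show ?thesis using q0 by (simp add: s_def)
  qed
  have "eval2 H0 z = 0" if z: "z \<in> U" for z
  proof -
    have "G0 z = ?N z ^ k0 * Q0 (z, d^2 / ?N z)" using G0(2) U(3)[OF z] by simp
    then show ?thesis using zeroU[OF z] H0 by simp
  qed
  then have "f dvd H0" by (rule vanish_on_curve[OF irr U(1,2)])
  then have "eval2 H0 y0 = 0" using y0(1) by (cases y0) (auto simp: zero_set_def intro: eval2_dvd)
  then have "?N y0 ^ k0 * Q0 (y0, d^2 / ?N y0) = 0" using G0(2)[OF y0(2)] H0 by simp
  then have z0: "Q0 (y0, d^2 / ?N y0) = 0" using y0(2) by simp
  have "eval2 H1 z = 0" if z: "z \<in> U" for z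
  proof -
    have "G1 z = ?N z ^ k1 * Q1 (z, d^2 / ?N z)" using G1(2) U(3)[OF z] by simp
    then show ?thesis using zeroU[OF z] H1 by simp
  qed
  then have "f dvd H1" by (rule vanish_on_curve[OF irr U(1,2)])
  then have "eval2 H1 y0 = 0" using y0(1) by (cases y0) (auto simp: zero_set_def intro: eval2_dvd)
  then have "?N y0 ^ k1 * Q1 (y0, d^2 / ?N y0) = 0" using G1(2)[OF y0(2)] H1 by simp
  then have z1: "Q1 (y0, d^2 / ?N y0) = 0" using y0(2) by simp
  have "t0^2 = d^2 / ?N y0" using y0(2,3) by (simp add: field_simps)
  then have "P (y0, t0) = 0" using Q(3)[of y0 t0] z0 z1 by simp
  then show ?thesis by (simp add: P_def)
qed

lemma part1:
  fixes f :: "'a::{alg_closed_field, field_char_0} poly poly"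
  assumes irr: "irreducible f" and d0: "d \<noteq> 0"
    and C0: "{p \<in> zero_set {f}. (fst p - a)^2 + (snd p - b)^2 \<noteq> 0} \<noteq> {}"
    and Om: "\<Omega> \<noteq> {}" "zar_open_in (zero_set {f}) \<Omega>"
  shows "pi1 ` (conchB f a b d \<inter> pi2 -` \<Omega>) \<noteq> {} \<and>
         zar_dense_in (conchoid f a b d) (pi1 ` (conchB f a b d \<inter> pi2 -` \<Omega>))"
proof -
  define C where "C = zero_set {f}"
  define N where "N = Nf a b"
  define B where "B = conchB f a b d"
  define S where "S = pi1 ` (B \<inter> pi2 -` \<Omega>)"
  obtain T where T: "zar_closed T" "\<Omega> = C - T" using Om(2) by (auto simp: zar_open_in_def C_def)
  obtain NP where NP: "N = eval2 NP" using pf2_eval2[OF Npf] N_def by blast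
  have CT: "finite (C \<inter> T)"
    using dichotomy[OF irr T(1)] T(2) Om(1) C_def by auto
  have CN: "finite (C \<inter> zero_set {NP})"
  proof -
    obtain p where p: "p \<in> C" "N p \<noteq> 0" using C0 unfolding C_def N_def Nf_def by auto
    have "p \<notin> zero_set {NP}" using p(2) NP by (simp add: zero_set_def)
    then have "\<not> C \<subseteq> zero_set {NP}" using p(1) by blast
    then show ?thesis using dichotomy[OF irr closed_zero_set[of "{NP}"]] C_def by auto
  qed
  define U where "U = {y \<in> \<Omega>. N y \<noteq> 0}"
  have U_eq: "U = C - (C \<inter> T) - (C \<inter> zero_set {NP})"
    unfolding U_def T(2) by (auto simp: zero_set_def NP)
  have infC: "infinite C" using zero_set_infinite[OF irr] C_def by simp
  have infU: "infinite U" unfolding U_eq using infC CT CN by (simp add: Diff_infinite_finite)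
  have UC: "U \<subseteq> C" using U_def T(2) by auto
  have UN: "\<And>y. y \<in> U \<Longrightarrow> N y \<noteq> 0" using U_def by auto
  have inS: "ptf a b y t \<in> S" if y: "y \<in> U" and t: "t^2 * N y = d^2" for y t
  proof -
    have "eval2 f y = 0" using UC y by (auto simp: C_def zero_set_def)
    then have "(ptf a b y t, y, 1 / N y) \<in> B" using B_intro[of f y a b t d] UN[OF y] t
      by (simp add: B_def N_def)
    moreover have "y \<in> \<Omega>" using y U_def by auto
    ultimately show ?thesis unfolding S_def by (force simp: pi1_def pi2_def)
  qed
  have "U \<noteq> {}" using infU by auto
  then obtain y where y: "y \<in> U" by blast
  obtain t where "t^2 = d^2 / N y" using sqrt_ex by blast
  then have "t^2 * N y = d^2" using UN[OF y] by simp
  then have Sne: "S \<noteq> {}" using inS[OF y] by blast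
  have SB: "S \<subseteq> pi1 ` B" unfolding S_def by auto
  have BS: "pi1 ` B \<subseteq> zar_closure S"
  proof
    fix x assume "x \<in> pi1 ` B"
    then obtain e where e: "e \<in> B" "x = pi1 e" by blast
    obtain P' where P': "zar_closure S = zero_set P'" using closure_closed[of S] by (auto simp: zar_closed_def)
    have "eval2 g x = 0" if g: "g \<in> P'" for g
    proof -
      from e(1) obtain t0 where em: "eval2 f (pi2 e) = 0" "N (pi2 e) \<noteq> 0" "t0^2 * N (pi2 e) = d^2"
        "pi1 e = ptf a b (pi2 e) t0"
        unfolding B_def N_def by (subst (asm) B_mem) blast
      have van: "eval2 g (ptf a b y' t') = 0" if "y' \<in> U" "t'^2 * Nf a b y' = d^2" for y' t'
      proof -
        have "ptf a b y' t' \<in> zero_set P'" using inS[of y' t'] that closure_sub[of S] P' N_def by auto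
        then show ?thesis using g by (auto simp: zero_set_def)
      qed
      have "eval2 g (ptf a b (pi2 e) t0) = 0"
        by (rule transfer[OF irr d0 _ infU _ eval2_pf van])
           (use UC UN em in \<open>auto simp: C_def N_def zero_set_def\<close>)
      then show ?thesis using e(2) em(4) by simp
    qed
    then show "x \<in> zar_closure S" using P' by (auto simp: zero_set_def)
  qed
  have "zar_dense_in (conchoid f a b d) S"
    unfolding zar_dense_in_def conchoid_def
  proof
    show "S \<subseteq> zar_closure (pi1 ` conchB f a b d)" using SB closure_sub B_def by blast
    show "zar_closure (pi1 ` conchB f a b d) \<subseteq> zar_closure S"
      using closure_min[OF closure_closed BS] B_def by simp
  qed
  then show ?thesis using Sne S_def B_def by simp
qed

lemma comp_not_in_closure:
  fixes X Z :: "('a::{alg_closed_field,field_char_0} \<times> 'a) set"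
  assumes Xc: "zar_closed X" and comp: "irred_component X Z"
  shows "\<not> Z \<subseteq> zar_closure (X - Z)"
proof -
  have ZX: "Z \<subseteq> X" and Zi: "zar_irreducible Z"
    and max: "\<And>Z'. Z \<subseteq> Z' \<Longrightarrow> Z' \<subseteq> X \<Longrightarrow> zar_closed Z' \<Longrightarrow> zar_irreducible Z' \<Longrightarrow> Z' = Z"
    using comp unfolding irred_component_def by blast+
  have Zne: "Z \<noteq> {}" using Zi by (simp add: zar_irreducible_def)
  have "\<exists>W. zar_closed W \<and> X - Z \<subseteq> W \<and> \<not> Z \<subseteq> W"
  proof (cases "X = UNIV")
    case True
    then have "UNIV = Z" using max[of UNIV] UNIV_irreducible zclosed_UNIV by auto
    then show ?thesis using Zne zclosed_empty by (intro exI[of _ "{}"]) auto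
  next
    case False
    obtain P where P: "X = zero_set P" using Xc by (auto simp: zar_closed_def)
    obtain g where g: "g \<in> P" "g \<noteq> 0"
    proof (rule ccontr)
      assume "\<not> thesis"
      then have "\<forall>g\<in>P. g = 0" using that by blast
      then have "X = UNIV" using P by (auto simp: zero_set_def eval2_zero)
      with False show False by blast
    qed
    obtain H where H: "finite H" "\<forall>h\<in>H. irreducible h" "zero_set {g} = (\<Union>h\<in>H. zero_set {h})"
      using decomp[OF g(2)] by blast
    have XH: "X \<subseteq> (\<Union>h\<in>H. zero_set {h})" using H(3) P g(1) by (auto simp: zero_set_def)
    define I where "I = {h\<in>H. zero_set {h} \<subseteq> X}"
    define F0 where "F0 = X - (\<Union>h\<in>I. zero_set {h})"
    have "F0 \<subseteq> (\<Union>h\<in>H - I. zero_set {h} \<inter> X)"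
    proof
      fix x assume x: "x \<in> F0"
      then have xX: "x \<in> X" and xn: "\<forall>h\<in>I. x \<notin> zero_set {h}" unfolding F0_def by auto
      from xX XH obtain h where h: "h \<in> H" "x \<in> zero_set {h}" by blast
      then have "h \<notin> I" using xn by blast
      then show "x \<in> (\<Union>h\<in>H - I. zero_set {h} \<inter> X)" using h xX by blast
    qed
    moreover have "finite (\<Union>h\<in>H - I. zero_set {h} \<inter> X)"
    proof (rule finite_UN_I)
      show "finite (H - I)" using H(1) by simp
      fix h assume h: "h \<in> H - I"
      then show "finite (zero_set {h} \<inter> X)" using dichotomy[OF _ Xc, of h] H(2) I_def by auto
    qed
    ultimately have finF0: "finite F0" by (rule finite_subset)
    define W where "W = (F0 - Z) \<union> \<Union> ((\<lambda>h. zero_set {h}) ` {h\<in>I. zero_set {h} \<noteq> Z})"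
    define Fam where "Fam = insert (F0 - Z) ((\<lambda>h. zero_set {h}) ` {h\<in>I. zero_set {h} \<noteq> Z})"
    have finFam: "finite Fam" unfolding Fam_def I_def using H(1) by simp
    have clFam: "\<And>S. S \<in> Fam \<Longrightarrow> zar_closed S"
      unfolding Fam_def using closed_finite finF0 closed_zero_set by auto
    have WF: "W = \<Union> Fam" unfolding W_def Fam_def by simp
    have Wc: "zar_closed W" unfolding WF by (rule closed_Union_finite[OF finFam clFam])
    have XW: "X - Z \<subseteq> W" unfolding W_def F0_def by blast
    have "\<not> Z \<subseteq> W"
    proof
      assume "Z \<subseteq> W"
      then obtain S where S: "S \<in> Fam" "Z \<subseteq> S"
        using irreducible_Union[OF Zi finFam clFam] WF by blast
      show False
      proof (cases "S = F0 - Z")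
        case True
        then show False using S(2) Zne by blast
      next
        case False
        then obtain h where h: "h \<in> I" "zero_set {h} \<noteq> Z" "S = zero_set {h}"
          using S(1) unfolding Fam_def by blast
        have "zero_set {h} = Z"
          using max[of "zero_set {h}"] S(2) h I_def closed_zero_set curve_irreducible H(2) by auto
        with h show False by blast
      qed
    qed
    then show ?thesis using Wc XW by blast
  qed
  then obtain W where W: "zar_closed W" "X - Z \<subseteq> W" "\<not> Z \<subseteq> W" by blast
  have "zar_closure (X - Z) \<subseteq> W" using closure_min[OF W(1,2)] .
  then show ?thesis using W(3) by blast
qed

lemma part2:
  fixes f :: "'a::{alg_closed_field, field_char_0} poly poly"
  assumes irr: "irreducible f" and d0: "d \<noteq> 0"
    and C0: "{p \<in> zero_set {f}. (fst p - a)^2 + (snd p - b)^2 \<noteq> 0} \<noteq> {}"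
    and comp: "irred_component (conchoid f a b d) Z"
    and Om: "\<Omega> \<noteq> {}" "zar_open_in Z \<Omega>"
  shows "pi2 ` (conchB f a b d \<inter> pi1 -` \<Omega>) \<noteq> {} \<and>
         zar_dense_in (zero_set {f}) (pi2 ` (conchB f a b d \<inter> pi1 -` \<Omega>))"
proof -
  define C where "C = zero_set {f}"
  define B where "B = conchB f a b d"
  define X where "X = conchoid f a b d"
  define Y where "Y = pi2 ` (B \<inter> pi1 -` \<Omega>)"
  obtain T where T: "zar_closed T" "\<Omega> = Z - T" using Om(2) by (auto simp: zar_open_in_def)
  have ZX: "Z \<subseteq> X" and Zi: "zar_irreducible Z" and Zc: "zar_closed Z"
    using comp unfolding irred_component_def X_def by blast+
  have YC: "Y \<subseteq> C"
  proof
    fix y assume "y \<in> Y"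
    then obtain e where "e \<in> B" "y = pi2 e" unfolding Y_def by blast
    then show "y \<in> C" unfolding B_def C_def by (subst (asm) B_mem) (auto simp: zero_set_def)
  qed
  have infC: "infinite C" using zero_set_infinite[OF irr] C_def by simp
  have infY: "infinite Y"
  proof
    assume finY: "finite Y"
    define \<Omega>' where "\<Omega>' = C - Y"
    have O'ne: "\<Omega>' \<noteq> {}" unfolding \<Omega>'_def using infC finY YC
      by (metis Diff_eq_empty_iff finite_subset)
    have O'op: "zar_open_in (zero_set {f}) \<Omega>'"
      unfolding zar_open_in_def \<Omega>'_def C_def using closed_finite[OF finY] by blast
    define S' where "S' = pi1 ` (B \<inter> pi2 -` \<Omega>')"
    have dense: "zar_dense_in X S'"
      using part1[OF irr d0 C0 O'ne O'op] unfolding S'_def B_def X_def by blast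
    have S'X: "S' \<subseteq> X" and XS': "X \<subseteq> zar_closure S'" using dense by (auto simp: zar_dense_in_def)
    have S'O: "S' \<inter> \<Omega> = {}"
    proof (rule ccontr)
      assume "S' \<inter> \<Omega> \<noteq> {}"
      then obtain e where e: "e \<in> B" "pi2 e \<in> \<Omega>'" "pi1 e \<in> \<Omega>" unfolding S'_def by blast
      then have "pi2 e \<in> Y" unfolding Y_def by blast
      with e(2) show False unfolding \<Omega>'_def by blast
    qed
    have ZT: "zar_closed (Z \<inter> T)" using closed_Inter[of "{Z, T}"] Zc T(1) by auto
    have "S' \<subseteq> (X - Z) \<union> (Z \<inter> T)" using S'X S'O T(2) by blast
    then have "zar_closure S' \<subseteq> zar_closure (X - Z) \<union> (Z \<inter> T)"
      by (intro closure_min closed_Un closure_closed ZT) (use closure_sub in blast)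
    then have "Z \<subseteq> zar_closure (X - Z) \<union> (Z \<inter> T)" using ZX XS' by blast
    then have "Z \<subseteq> zar_closure (X - Z) \<or> Z \<subseteq> Z \<inter> T"
      using Zi closure_closed ZT unfolding zar_irreducible_def by blast
    moreover have "\<not> Z \<subseteq> zar_closure (X - Z)"
      using comp_not_in_closure[OF _ comp] closure_closed X_def conchoid_def by metis
    moreover have "\<not> Z \<subseteq> Z \<inter> T" using Om(1) T(2) by blast
    ultimately show False by blast
  qed
  have Yne: "Y \<noteq> {}" using infY by auto
  have "C \<subseteq> zar_closure Y"
  proof
    fix p assume p: "p \<in> C"
    obtain P' where P': "zar_closure Y = zero_set P'" using closure_closed[of Y] by (auto simp: zar_closed_def)
    have "eval2 g p = 0" if g: "g \<in> P'" for g
    proof -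
      have "eval2 g z = 0" if "z \<in> Y" for z using that closure_sub[of Y] P' g by (auto simp: zero_set_def)
      then have "f dvd g" using vanish_on_curve[OF irr _ infY] YC C_def by blast
      then show ?thesis using p C_def by (cases p) (auto simp: zero_set_def intro: eval2_dvd)
    qed
    then show "p \<in> zar_closure Y" using P' by (auto simp: zero_set_def)
  qed
  then show ?thesis using Yne YC unfolding zar_dense_in_def Y_def B_def C_def by blast
qed

theorem lemma3:
  fixes f :: "'a::{alg_closed_field, field_char_0} poly poly"
    and a b d :: 'a
  defines "C \<equiv> zero_set {f}"
  assumes f_irr: "irreducible f"
    and d_nz: "d \<noteq> 0"
    and C0_ne: "{p \<in> C. (fst p - a)^2 + (snd p - b)^2 \<noteq> 0} \<noteq> {}"
  shows
    "(\<forall>\<Omega>. \<Omega> \<noteq> {} \<and> zar_open_in C \<Omega> \<longrightarrow>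
        pi1 ` (conchB f a b d \<inter> pi2 -` \<Omega>) \<noteq> {} \<and>
        zar_dense_in (conchoid f a b d) (pi1 ` (conchB f a b d \<inter> pi2 -` \<Omega>)))
     \<and>
     (C \<noteq> {p. (fst p - a)^2 + (snd p - b)^2 = d^2} \<longrightarrow>
       (\<forall>Z \<Omega>. irred_component (conchoid f a b d) Z \<and> \<Omega> \<noteq> {} \<and> zar_open_in Z \<Omega> \<longrightarrow>
          pi2 ` (conchB f a b d \<inter> pi1 -` \<Omega>) \<noteq> {} \<and>
          zar_dense_in C (pi2 ` (conchB f a b d \<inter> pi1 -` \<Omega>))))"
proof -
  have P1: "\<forall>\<Omega>. \<Omega> \<noteq> {} \<and> zar_open_in C \<Omega> \<longrightarrow>
        pi1 ` (conchB f a b d \<inter> pi2 -` \<Omega>) \<noteq> {} \<and>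
        zar_dense_in (conchoid f a b d) (pi1 ` (conchB f a b d \<inter> pi2 -` \<Omega>))"
    using part1[OF f_irr d_nz C0_ne[unfolded C_def]] unfolding C_def by blast
  have P2: "\<forall>Z \<Omega>. irred_component (conchoid f a b d) Z \<and> \<Omega> \<noteq> {} \<and> zar_open_in Z \<Omega> \<longrightarrow>
          pi2 ` (conchB f a b d \<inter> pi1 -` \<Omega>) \<noteq> {} \<and>
          zar_dense_in C (pi2 ` (conchB f a b d \<inter> pi1 -` \<Omega>))"
    using part2[OF f_irr d_nz C0_ne[unfolded C_def]] unfolding C_def by blast
  show ?thesis using P1 P2 by blast
qed

end
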